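(* Let $N\in\mathbb{C}^{m\times n}$ have rank $r$ and singular value decomposition $N=U\begin{pmatrix}\Sigma & 0\\ 0 & 0\end{pmatrix}V^{\ast}$, where $\Sigma\in\mathbb{C}^{r\times r}$ is diagonal with positive diagonal entries and $U\in\mathbb{C}^{m\times m}$, $V\in\mathbb{C}^{n\times n}$ are unitary. Let $X\in\mathbb{C}^{m\times m}$ and $Y\in\mathbb{C}^{n\times n}$ be nonsingular, and let $M_{1}=XN$, $M_{2}=NY$. (1) If $X=U\begin{pmatrix}X_{1} & 0\\ X_{2} & X_{4}\end{pmatrix}U^{\ast}$ for some $X_{1}\in\mathbb{C}^{r\times r}$, $X_{2}\in\mathbb{C}^{(m-r)\times r}$, $X_{4}\in\mathbb{C}^{(m-r)\times(m-r)}$, then $$M_{1}M_{1}^{\dagger}=(I+R)NN^{\dagger}(I+R^{\ast}R)^{-1}(I+R^{\ast}),$$ where $R=XE_{N}X^{-1}(E_{N}-I)$. (2) If $Y=V\begin{pmatrix}Y_{1} & Y_{3}\\ 0 & Y_{4}\end{pmatrix}V^{\ast}$ for some $Y_{1}\in\mathbb{C}^{r\times r}$, $Y_{3}\in\mathbb{C}^{r\times(n-r)}$, $Y_{4}\in\mathbb{C}^{(n-r)\times(n-r)}$, then $$M_{2}^{\dagger}M_{2}=(I+L^{\ast})(I+LL^{\ast})^{-1}N^{\dagger}N(I+L),$$ where $L=(F_{N}-I)Y^{-1}F_{N}Y$.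
   Context: For a complex matrix $A$, $A^{\ast}$ is its conjugate transpose and $A^{\dagger}$ its Moore--Penrose inverse. $E_{A}:=I-AA^{\dagger}$ and $F_{A}:=I-A^{\dagger}A$. $I$ denotes an identity matrix of the appropriate size. *)

theory Defs
  imports "Jordan_Normal_Form.Schur_Decomposition" "Jordan_Normal_Form.DL_Rank"
begin

definition unitary_mat :: "complex mat \<Rightarrow> nat \<Rightarrow> bool" where
  "unitary_mat U k \<longleftrightarrow> U \<in> carrier_mat k k \<and> U * mat_adjoint U = 1\<^sub>m k \<and> mat_adjoint U * U = 1\<^sub>m k"

definition minv :: "complex mat \<Rightarrow> complex mat" where
  "minv A = (THE B. B \<in> carrier_mat (dim_row A) (dim_row A) \<and>
                    A * B = 1\<^sub>m (dim_row A) \<and> B * A = 1\<^sub>m (dim_row A))"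

definition mp_inv :: "complex mat \<Rightarrow> complex mat" where
  "mp_inv A = (THE G. G \<in> carrier_mat (dim_col A) (dim_row A) \<and>
                  A * G * A = A \<and> G * A * G = G \<and>
                  mat_adjoint (A * G) = A * G \<and> mat_adjoint (G * A) = G * A)"

end

theory Submission
  imports Defs
begin

lemma adj_def': "mat_adjoint A = mat (dim_col A) (dim_row A) (\<lambda>(i,j). conjugate (A $$ (j,i)))"
  unfolding mat_adjoint_def
  by (rule eq_matI, auto simp: mat_of_rows_index)

lemma adj_index[simp]:
  "dim_row (mat_adjoint A) = dim_col A" "dim_col (mat_adjoint A) = dim_row A"
  "i < dim_col A \<Longrightarrow> j < dim_row A \<Longrightarrow> mat_adjoint A $$ (i,j) = conjugate (A $$ (j,i))"
  unfolding adj_def' by auto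

lemma adj_carrier[simp]: "A \<in> carrier_mat m n \<Longrightarrow> mat_adjoint A \<in> carrier_mat n m"
  unfolding carrier_mat_def by simp

lemma adj_adj[simp]: "mat_adjoint (mat_adjoint A) = A"
  by (rule eq_matI, auto)

lemma adj_mult: "(A :: complex mat) \<in> carrier_mat m k \<Longrightarrow> B \<in> carrier_mat k n \<Longrightarrow>
  mat_adjoint (A * B) = mat_adjoint B * mat_adjoint A"
proof (rule eq_matI)
  fix i j assume "A \<in> carrier_mat m k" "B \<in> carrier_mat k n" and ij: "i < dim_row (mat_adjoint B * mat_adjoint A)"
    "j < dim_col (mat_adjoint B * mat_adjoint A)"
  thus "mat_adjoint (A * B) $$ (i, j) = (mat_adjoint B * mat_adjoint A) $$ (i, j)"
    by (simp add: scalar_prod_def cnj_sum mult.commute)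
qed auto

lemma adj_add: "(A :: complex mat) \<in> carrier_mat m n \<Longrightarrow> B \<in> carrier_mat m n \<Longrightarrow>
  mat_adjoint (A + B) = mat_adjoint A + mat_adjoint B"
  by (rule eq_matI, auto)
lemma adj_minus: "(A :: complex mat) \<in> carrier_mat m n \<Longrightarrow> B \<in> carrier_mat m n \<Longrightarrow>
  mat_adjoint (A - B) = mat_adjoint A - mat_adjoint B"
  by (rule eq_matI, auto)
lemma adj_uminus: "mat_adjoint (- (A :: complex mat)) = - mat_adjoint A"
  by (rule eq_matI, auto)
lemma adj_one[simp]: "mat_adjoint (1\<^sub>m n :: complex mat) = 1\<^sub>m n"
  by (rule eq_matI, auto)
lemma adj_zero[simp]: "mat_adjoint (0\<^sub>m m n :: complex mat) = 0\<^sub>m n m"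
  by (rule eq_matI, auto)
lemma adj_four_block: "(A :: complex mat) \<in> carrier_mat m1 n1 \<Longrightarrow> B \<in> carrier_mat m1 n2 \<Longrightarrow> C \<in> carrier_mat m2 n1 \<Longrightarrow> D \<in> carrier_mat m2 n2 \<Longrightarrow>
  mat_adjoint (four_block_mat A B C D) = four_block_mat (mat_adjoint A) (mat_adjoint C) (mat_adjoint B) (mat_adjoint D)"
proof -
  assume c: "A \<in> carrier_mat m1 n1" "B \<in> carrier_mat m1 n2" "C \<in> carrier_mat m2 n1" "D \<in> carrier_mat m2 n2"
  note d = carrier_matD[OF c(1)] carrier_matD[OF c(2)] carrier_matD[OF c(3)] carrier_matD[OF c(4)]
  show ?thesis
  proof (rule eq_matI)
    fix i j assume ij: "i < dim_row (four_block_mat (mat_adjoint A) (mat_adjoint C) (mat_adjoint B) (mat_adjoint D))"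
      "j < dim_col (four_block_mat (mat_adjoint A) (mat_adjoint C) (mat_adjoint B) (mat_adjoint D))"
    hence i: "i < n1 + n2" and j: "j < m1 + m2" using d by simp_all
    show "mat_adjoint (four_block_mat A B C D) $$ (i, j) = four_block_mat (mat_adjoint A) (mat_adjoint C) (mat_adjoint B) (mat_adjoint D) $$ (i, j)"
      using i j d by (cases "i < n1"; cases "j < m1") simp_all
  qed (use d in simp_all)
qed
lemma det_ne0_invertible: assumes A: "(A :: complex mat) \<in> carrier_mat k k" and d: "det A \<noteq> 0"
  shows "invertible_mat A"
proof -
  from det_non_zero_imp_unit[OF A d, of "()"]
  obtain B where B: "B \<in> carrier_mat k k" "B * A = 1\<^sub>m k" "A * B = 1\<^sub>m k"
    unfolding Units_def ring_mat_def by auto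
  have "dim_col A = dim_row A" "A * B = 1\<^sub>m (dim_row A)" "B * A = 1\<^sub>m (dim_row B)" using A B by auto
  thus ?thesis unfolding invertible_mat_def inverts_mat_def square_mat.simps by blast
qed

lemma invertible_carrier: assumes A: "A \<in> carrier_mat k k" and i: "invertible_mat A"
  shows "\<exists>B. B \<in> carrier_mat k k \<and> A * B = 1\<^sub>m k \<and> B * A = 1\<^sub>m k"
proof -
  from i obtain B where AB: "A * B = 1\<^sub>m (dim_row A)" and BA: "B * A = 1\<^sub>m (dim_row B)"
    unfolding invertible_mat_def inverts_mat_def by auto
  have "dim_col B = k" using arg_cong[OF AB, of dim_col] A by auto
  moreover have "dim_row B = k" using arg_cong[OF BA, of dim_col] A by auto
  ultimately have Bc: "B \<in> carrier_mat k k" unfolding carrier_mat_def by simp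
  have "A * B = 1\<^sub>m k" "B * A = 1\<^sub>m k" using AB BA A Bc by simp_all
  thus ?thesis using Bc by blast
qed

lemma minv_unique: assumes A: "A \<in> carrier_mat k k" and B: "B \<in> carrier_mat k k" and AB: "A * B = 1\<^sub>m k"
  shows "minv A = B"
proof -
  have BA: "B * A = 1\<^sub>m k" using mat_mult_left_right_inverse[OF A B AB] .
  have dr: "dim_row A = k" using A by auto
  show ?thesis unfolding minv_def dr
  proof (rule the_equality)
    show "B \<in> carrier_mat k k \<and> A * B = 1\<^sub>m k \<and> B * A = 1\<^sub>m k" using B AB BA by auto
  next
    fix C assume C: "C \<in> carrier_mat k k \<and> A * C = 1\<^sub>m k \<and> C * A = 1\<^sub>m k"
    have "C = C * (A * B)" using C AB by auto
    also have "\<dots> = (C * A) * B" using C A B by (intro assoc_mult_mat[symmetric, of C k k A k B k]) auto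
    also have "\<dots> = B" using C B by (simp del: assoc_mult_mat)
    finally show "C = B" .
  qed
qed

lemma minv_props: assumes A: "A \<in> carrier_mat k k" and i: "invertible_mat A"
  shows "minv A \<in> carrier_mat k k" "A * minv A = 1\<^sub>m k" "minv A * A = 1\<^sub>m k"
proof -
  obtain B where B: "B \<in> carrier_mat k k" "A * B = 1\<^sub>m k" "B * A = 1\<^sub>m k" using invertible_carrier[OF A i] by auto
  have "minv A = B" by (rule minv_unique[OF A B(1,2)])
  thus "minv A \<in> carrier_mat k k" "A * minv A = 1\<^sub>m k" "minv A * A = 1\<^sub>m k" using B by auto
qed

lemma invertibleI: assumes A: "(A :: complex mat) \<in> carrier_mat k k" and B: "B \<in> carrier_mat k k" and AB: "A * B = 1\<^sub>m k"
  shows "invertible_mat A"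
proof -
  have "dim_col A = dim_row A" "A * B = 1\<^sub>m (dim_row A)" "B * A = 1\<^sub>m (dim_row B)"
    using A B AB mat_mult_left_right_inverse[OF A B AB] by auto
  thus ?thesis unfolding invertible_mat_def inverts_mat_def square_mat.simps by blast
qed

lemma cinner_adj: assumes R: "(R :: complex mat) \<in> carrier_mat m k" and v: "v \<in> carrier_vec k" and w: "w \<in> carrier_vec m"
  shows "v \<bullet>c (mat_adjoint R *\<^sub>v w) = (R *\<^sub>v v) \<bullet>c w"
proof -
  have "v \<bullet>c (mat_adjoint R *\<^sub>v w) = (\<Sum>i<k. v $ i * (\<Sum>j<m. R $$ (j,i) * cnj (w $ j)))"
    using R v w by (simp add: scalar_prod_def mult_mat_vec_def cnj_sum lessThan_atLeast0 row_def col_def)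
  also have "\<dots> = (\<Sum>i<k. \<Sum>j<m. R $$ (j,i) * v $ i * cnj (w $ j))"
    by (simp add: sum_distrib_left mult_ac)
  also have "\<dots> = (\<Sum>j<m. \<Sum>i<k. R $$ (j,i) * v $ i * cnj (w $ j))"
    by (rule sum.swap)
  also have "\<dots> = (R *\<^sub>v v) \<bullet>c w"
    using R v w by (simp add: scalar_prod_def mult_mat_vec_def lessThan_atLeast0 row_def sum_distrib_right)
  finally show ?thesis .
qed

lemma one_plus_adj_invertible: assumes R: "(R :: complex mat) \<in> carrier_mat m k"
  shows "invertible_mat (1\<^sub>m k + mat_adjoint R * R)"
proof (rule det_ne0_invertible)
  show T: "1\<^sub>m k + mat_adjoint R * R \<in> carrier_mat k k" using R by auto
  show "det (1\<^sub>m k + mat_adjoint R * R) \<noteq> 0"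
  proof
    assume "det (1\<^sub>m k + mat_adjoint R * R) = 0"
    then obtain v where v: "v \<in> carrier_vec k" "v \<noteq> 0\<^sub>v k" and Tv: "(1\<^sub>m k + mat_adjoint R * R) *\<^sub>v v = 0\<^sub>v k"
      using det_0_iff_vec_prod_zero[OF T] by auto
    have Rv: "R *\<^sub>v v \<in> carrier_vec m" using R v by auto
    have veq: "(1\<^sub>m k + mat_adjoint R * R) *\<^sub>v v = v + mat_adjoint R *\<^sub>v (R *\<^sub>v v)"
    proof -
      have "(1\<^sub>m k + mat_adjoint R * R) *\<^sub>v v = 1\<^sub>m k *\<^sub>v v + (mat_adjoint R * R) *\<^sub>v v"
        by (rule add_mult_distrib_mat_vec[of _ k k]) (use R v in auto)
      also have "\<dots> = v + mat_adjoint R *\<^sub>v (R *\<^sub>v v)" using R v by (simp add: assoc_mult_mat_vec[of _ k m _ k])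
      finally show ?thesis .
    qed
    have eq0: "v + mat_adjoint R *\<^sub>v (R *\<^sub>v v) = 0\<^sub>v k" using veq Tv by metis
    have "v \<bullet>c (v + mat_adjoint R *\<^sub>v (R *\<^sub>v v)) = 0" unfolding eq0 using v by simp
    moreover have "v \<bullet>c (v + mat_adjoint R *\<^sub>v (R *\<^sub>v v)) = v \<bullet>c v + v \<bullet>c (mat_adjoint R *\<^sub>v (R *\<^sub>v v))"
    proof -
      have w: "mat_adjoint R *\<^sub>v (R *\<^sub>v v) \<in> carrier_vec k"
        by (rule mult_mat_vec_carrier[of _ k m]) (use R Rv in auto)
      show ?thesis unfolding conjugate_add_vec[OF v(1) w]
        by (rule scalar_prod_add_distrib[of _ k]) (use v w in auto)
    qed
    ultimately have "v \<bullet>c v + (R *\<^sub>v v) \<bullet>c (R *\<^sub>v v) = 0"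
      unfolding cinner_adj[OF R v(1) Rv] by simp
    moreover have "v \<bullet>c v \<ge> 0" "(R *\<^sub>v v) \<bullet>c (R *\<^sub>v v) \<ge> 0" by auto
    ultimately have "v \<bullet>c v = 0" by (simp add: add_nonneg_eq_0_iff)
    thus False using v by simp
  qed
qed
lemma assoc': assumes "dim_col A = dim_row B" "dim_col B = dim_row C" shows "(A :: complex mat) * B * C = A * (B * C)"
proof -
  have "A \<in> carrier_mat (dim_row A) (dim_row B)" "B \<in> carrier_mat (dim_row B) (dim_row C)" "C \<in> carrier_mat (dim_row C) (dim_col C)"
    using assms unfolding carrier_mat_def by simp_all
  thus ?thesis by (rule assoc_mult_mat)
qed

lemma dist_l': assumes "dim_col A = dim_row B" "dim_row B = dim_row C" "dim_col B = dim_col C" shows "(A :: complex mat) * (B + C) = A * B + A * C"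
proof -
  have "A \<in> carrier_mat (dim_row A) (dim_row B)" "B \<in> carrier_mat (dim_row B) (dim_col B)" "C \<in> carrier_mat (dim_row B) (dim_col B)"
    using assms unfolding carrier_mat_def by simp_all
  thus ?thesis by (rule mult_add_distrib_mat)
qed
lemma dist_r': assumes "dim_row A = dim_row B" "dim_col A = dim_col B" "dim_col B = dim_row C" shows "((A :: complex mat) + B) * C = A * C + B * C"
proof -
  have "A \<in> carrier_mat (dim_row A) (dim_col A)" "B \<in> carrier_mat (dim_row A) (dim_col A)" "C \<in> carrier_mat (dim_col A) (dim_col C)"
    using assms unfolding carrier_mat_def by simp_all
  thus ?thesis by (rule add_mult_distrib_mat)
qed
lemma distm_l': assumes "dim_col A = dim_row B" "dim_row B = dim_row C" "dim_col B = dim_col C" shows "(A :: complex mat) * (B - C) = A * B - A * C"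
proof -
  have "A \<in> carrier_mat (dim_row A) (dim_row B)" "B \<in> carrier_mat (dim_row B) (dim_col B)" "C \<in> carrier_mat (dim_row B) (dim_col B)"
    using assms unfolding carrier_mat_def by simp_all
  thus ?thesis by (rule mult_minus_distrib_mat)
qed
lemma distm_r': assumes "dim_row A = dim_row B" "dim_col A = dim_col B" "dim_col B = dim_row C" shows "((A :: complex mat) - B) * C = A * C - B * C"
proof -
  have "A \<in> carrier_mat (dim_row A) (dim_col A)" "B \<in> carrier_mat (dim_row A) (dim_col A)" "C \<in> carrier_mat (dim_col A) (dim_col C)"
    using assms unfolding carrier_mat_def by simp_all
  thus ?thesis by (rule minus_mult_distrib_mat)
qed
lemma adj_mult': assumes "dim_col A = dim_row B" shows "mat_adjoint ((A :: complex mat) * B) = mat_adjoint B * mat_adjoint A"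
proof -
  have "A \<in> carrier_mat (dim_row A) (dim_row B)" "B \<in> carrier_mat (dim_row B) (dim_col B)"
    using assms unfolding carrier_mat_def by simp_all
  thus ?thesis by (rule adj_mult)
qed

lemma mp_inv_eq: assumes A: "(A :: complex mat) \<in> carrier_mat m n" and G: "G \<in> carrier_mat n m"
  and e1: "A * G * A = A" and e2: "G * A * G = G" and e3: "mat_adjoint (A * G) = A * G" and e4: "mat_adjoint (G * A) = G * A"
  shows "mp_inv A = G"
proof -
  have uniq: "G1 = G2" if G1: "G1 \<in> carrier_mat n m" and a1: "A * G1 * A = A" "G1 * A * G1 = G1" "mat_adjoint (A * G1) = A * G1" "mat_adjoint (G1 * A) = G1 * A"
    and G2: "G2 \<in> carrier_mat n m" and a2: "A * G2 * A = A" "G2 * A * G2 = G2" "mat_adjoint (A * G2) = A * G2" "mat_adjoint (G2 * A) = G2 * A" for G1 G2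
  proof -
    note d = carrier_matD[OF A] carrier_matD[OF G1] carrier_matD[OF G2]
    have i: "G1 = G1 * (mat_adjoint G1 * mat_adjoint A)"
    proof -
      have "G1 = G1 * (A * G1)" using a1(2) d by (simp add: assoc')
      also have "\<dots> = G1 * mat_adjoint (A * G1)" using a1(3) by simp
      finally show ?thesis using d by (simp add: adj_mult')
    qed
    have ii: "mat_adjoint A = mat_adjoint A * (A * G2)"
    proof -
      have "mat_adjoint A = mat_adjoint (A * G2 * A)" using a2(1) by simp
      also have "\<dots> = mat_adjoint A * mat_adjoint (A * G2)" using d by (simp add: adj_mult')
      finally show ?thesis using a2(3) by simp
    qed
    have iii: "G2 = mat_adjoint A * (mat_adjoint G2 * G2)"
    proof -
      have "G2 = (G2 * A) * G2" using a2(2) d by (simp add: assoc')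
      also have "\<dots> = mat_adjoint (G2 * A) * G2" using a2(4) by simp
      finally show ?thesis using d by (simp add: adj_mult' assoc')
    qed
    have iv: "mat_adjoint A = G1 * (A * mat_adjoint A)"
    proof -
      have "mat_adjoint A = mat_adjoint (A * (G1 * A))" using a1(1) d by (simp add: assoc')
      also have "\<dots> = mat_adjoint (G1 * A) * mat_adjoint A" using d by (simp add: adj_mult')
      finally show ?thesis using a1(4) d by (simp add: assoc')
    qed
    have x: "G1 * (A * G2) = G1"
    proof -
      have "G1 * (A * G2) = (G1 * (mat_adjoint G1 * mat_adjoint A)) * (A * G2)" by (simp only: i[symmetric])
      also have "\<dots> = G1 * (mat_adjoint G1 * (mat_adjoint A * (A * G2)))" using d by (simp add: assoc')
      also have "\<dots> = G1 * (mat_adjoint G1 * mat_adjoint A)" by (simp only: ii[symmetric])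
      also have "\<dots> = G1" by (simp only: i[symmetric])
      finally show ?thesis .
    qed
    have y: "G1 * (A * G2) = G2"
    proof -
      have "G1 * (A * G2) = G1 * (A * (mat_adjoint A * (mat_adjoint G2 * G2)))" by (simp only: iii[symmetric])
      also have "\<dots> = (G1 * (A * mat_adjoint A)) * (mat_adjoint G2 * G2)" using d by (simp add: assoc')
      also have "\<dots> = mat_adjoint A * (mat_adjoint G2 * G2)" by (simp only: iv[symmetric])
      also have "\<dots> = G2" by (simp only: iii[symmetric])
      finally show ?thesis .
    qed
    show ?thesis using x y by simp
  qed
  have dr: "dim_row A = m" "dim_col A = n" using A by auto
  show ?thesis unfolding mp_inv_def dr
  proof (rule the_equality)
    show "G \<in> carrier_mat n m \<and> A * G * A = A \<and> G * A * G = G \<and> mat_adjoint (A * G) = A * G \<and> mat_adjoint (G * A) = G * A"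
      using G e1 e2 e3 e4 by auto
  next
    fix G' assume "G' \<in> carrier_mat n m \<and> A * G' * A = A \<and> G' * A * G' = G' \<and> mat_adjoint (A * G') = A * G' \<and> mat_adjoint (G' * A) = G' * A"
    thus "G' = G" using uniq[of G' G] G e1 e2 e3 e4 by blast
  qed
qed

lemma uminus_zero_mat'[simp]: "- 0\<^sub>m n k = (0\<^sub>m n k :: complex mat)"
  by (rule eq_matI, auto)

lemma adj_add': assumes "dim_row A = dim_row B" "dim_col A = dim_col B"
  shows "mat_adjoint ((A :: complex mat) + B) = mat_adjoint A + mat_adjoint B"
proof -
  have "A \<in> carrier_mat (dim_row A) (dim_col A)" "B \<in> carrier_mat (dim_row A) (dim_col A)"
    using assms unfolding carrier_mat_def by simp_all
  thus ?thesis by (rule adj_add)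
qed
lemma adj_minus': assumes "dim_row A = dim_row B" "dim_col A = dim_col B"
  shows "mat_adjoint ((A :: complex mat) - B) = mat_adjoint A - mat_adjoint B"
proof -
  have "A \<in> carrier_mat (dim_row A) (dim_col A)" "B \<in> carrier_mat (dim_row A) (dim_col A)"
    using assms unfolding carrier_mat_def by simp_all
  thus ?thesis by (rule adj_minus)
qed

lemma add_zero_r'[simp]: "dim_row A = n \<Longrightarrow> dim_col A = k \<Longrightarrow> (A :: complex mat) + 0\<^sub>m n k = A"
  by (rule eq_matI, auto)
lemma add_zero_l'[simp]: "dim_row A = n \<Longrightarrow> dim_col A = k \<Longrightarrow> 0\<^sub>m n k + (A :: complex mat) = A"
  by (rule eq_matI, auto)

lemma core:
  fixes P X Xi R S W Q :: "complex mat"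
  assumes P: "P \<in> carrier_mat m m" and PP: "P * P = P" and Padj: "mat_adjoint P = P"
  and X: "X \<in> carrier_mat m m" and Xi: "Xi \<in> carrier_mat m m" and XXi: "X * Xi = 1\<^sub>m m" and XiX: "Xi * X = 1\<^sub>m m"
  and PXE: "P * X * (1\<^sub>m m - P) = 0\<^sub>m m m" and PXiE: "P * Xi * (1\<^sub>m m - P) = 0\<^sub>m m m"
  and R_def: "R = X * (1\<^sub>m m - P) * Xi * ((1\<^sub>m m - P) - 1\<^sub>m m)"
  and S_def: "S = minv (1\<^sub>m m + mat_adjoint R * R)"
  and W_def: "W = 1\<^sub>m m + R"
  and Q_def: "Q = W * P * S * mat_adjoint W"
shows "Q = W * S * P * mat_adjoint W" "mat_adjoint Q = Q" "Q * (X * P) = X * P" "X * P * Xi * Q = Q"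
proof -
  define E where "E = 1\<^sub>m m - P"
  have E: "E \<in> carrier_mat m m" unfolding E_def using P by auto
  have dP: "dim_row P = m" "dim_col P = m" using P by auto
  have dX: "dim_row X = m" "dim_col X = m" "dim_row Xi = m" "dim_col Xi = m" using X Xi by auto
  have dE: "dim_row E = m" "dim_col E = m" using E by auto
  have Em1: "E - 1\<^sub>m m = - P" unfolding E_def by (rule eq_matI, insert P, auto)
  have PE: "P * E = 0\<^sub>m m m" unfolding E_def using PP dP P by (simp add: distm_l' minus_r_inv_mat)
  have EP: "E * P = 0\<^sub>m m m" unfolding E_def using PP dP P by (simp add: distm_r' minus_r_inv_mat)
  have PplusE: "P + E = 1\<^sub>m m" unfolding E_def by (rule eq_matI, insert P, auto)
  have Eadj: "mat_adjoint E = E" unfolding E_def using P Padj by (simp add: adj_minus[of "1\<^sub>m m" m m P])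
  have Rdef: "R = - (X * (E * (Xi * P)))" unfolding R_def E_def[symmetric] Em1 using dX dE dP
    by (simp add: assoc')
  have R: "R \<in> carrier_mat m m" using Rdef X Xi E P by simp
  have dR: "dim_row R = m" "dim_col R = m" using R by auto
  have PR: "P * R = 0\<^sub>m m m"
  proof -
    have "P * (X * (E * (Xi * P))) = (P * X * E) * (Xi * P)" using dX dE dP by (simp add: assoc')
    also have "\<dots> = 0\<^sub>m m m" using PXE[folded E_def] dX dP by simp
    finally show ?thesis unfolding Rdef using dX dE dP by simp
  qed
  have RP: "R * P = R"
  proof -
    have "X * (E * (Xi * P)) * P = X * (E * (Xi * (P * P)))" using dX dE dP by (simp add: assoc')
    hence "- (X * (E * (Xi * P))) * P = - (X * (E * (Xi * P)))" using PP dX dE dP by simp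
    thus ?thesis by (simp only: Rdef)
  qed
  have aR: "mat_adjoint R \<in> carrier_mat m m" using R by simp
  have daR: "dim_row (mat_adjoint R) = m" "dim_col (mat_adjoint R) = m" using aR by auto
  have aRP: "mat_adjoint R * P = 0\<^sub>m m m"
  proof -
    have "mat_adjoint (P * R) = mat_adjoint R * P" using dP dR Padj by (simp add: adj_mult')
    thus ?thesis using PR by simp
  qed
  have PaR: "P * mat_adjoint R = mat_adjoint R"
  proof -
    have "mat_adjoint (R * P) = P * mat_adjoint R" using dP dR Padj by (simp add: adj_mult')
    thus ?thesis using RP by simp
  qed
  define T where "T = 1\<^sub>m m + mat_adjoint R * R"
  have T: "T \<in> carrier_mat m m" unfolding T_def carrier_mat_def using dR daR by simp
  have dT: "dim_row T = m" "dim_col T = m" using T by auto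
  have TP: "T * P = P + mat_adjoint R * R"
    unfolding T_def using dP daR dR RP by (simp add: dist_r' assoc')
  have PT: "P * T = P + mat_adjoint R * R"
  proof -
    have "P * T = P + P * (mat_adjoint R * R)" unfolding T_def using dP daR dR by (simp add: dist_l')
    also have "P * (mat_adjoint R * R) = mat_adjoint R * R" using PaR dP daR dR by (simp add: assoc'[symmetric])
    finally show ?thesis .
  qed
  have Tinv: "invertible_mat T" unfolding T_def by (rule one_plus_adj_invertible[OF R])
  have S: "S \<in> carrier_mat m m" and TS: "T * S = 1\<^sub>m m" and ST: "S * T = 1\<^sub>m m"
    using minv_props[OF T Tinv] unfolding S_def T_def[symmetric] by auto
  have dS: "dim_row S = m" "dim_col S = m" using S by auto
  have SP: "S * P = P * S"
  proof -
    have "S * P = S * (P * (T * S))" using TS dS dP by simp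
    also have "\<dots> = S * ((P * T) * S)" using dS dP dT by (simp add: assoc')
    also have "\<dots> = S * ((T * P) * S)" using TP PT by simp
    also have "\<dots> = (S * T) * (P * S)" using dS dP dT by (simp add: assoc')
    also have "\<dots> = P * S" using ST dP dS by simp
    finally show ?thesis .
  qed
  have Tadj: "mat_adjoint T = T" unfolding T_def using R
    by (simp add: adj_add' adj_mult')
  have Sadj: "mat_adjoint S = S"
  proof -
    have "T * mat_adjoint S = mat_adjoint (S * T)" using dS dT Tadj by (simp add: adj_mult')
    also have "\<dots> = 1\<^sub>m m" using ST by simp
    finally have "minv T = mat_adjoint S" using T S by (intro minv_unique) auto
    thus ?thesis unfolding S_def T_def[symmetric] by simp
  qed
  have Wc: "W \<in> carrier_mat m m" unfolding W_def carrier_mat_def using dR by simp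
  have dW: "dim_row W = m" "dim_col W = m" using Wc by auto
  have aW: "mat_adjoint W = 1\<^sub>m m + mat_adjoint R" unfolding W_def using R by (simp add: adj_add')
  have daW: "dim_row (mat_adjoint W) = m" "dim_col (mat_adjoint W) = m" using Wc by auto
  note ds = dP dX dE dR daR dT dS dW daW
  show Q1: "Q = W * S * P * mat_adjoint W"
  proof -
    have "Q = W * (P * (S * mat_adjoint W))" unfolding Q_def using ds by (simp add: assoc')
    also have "P * (S * mat_adjoint W) = S * (P * mat_adjoint W)" using ds SP by (simp add: assoc'[symmetric])
    finally show ?thesis using ds by (simp add: assoc')
  qed
  show "mat_adjoint Q = Q"
  proof -
    have "mat_adjoint Q = mat_adjoint (mat_adjoint W) * (mat_adjoint S * (mat_adjoint P * mat_adjoint W))"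
      unfolding Q_def using ds by (simp add: adj_mult' assoc')
    also have "\<dots> = W * S * P * mat_adjoint W" using ds Sadj Padj by (simp add: assoc')
    finally show ?thesis using Q1 by simp
  qed
  define Z where "Z = X * (E * (Xi * P))"
  have dZ: "dim_row Z = m" "dim_col Z = m" unfolding Z_def using ds by auto
  have 1: "1\<^sub>m m - E = P" unfolding E_def by (rule eq_matI, insert P, auto)
  have WP: "W * P = P + R" unfolding W_def using ds RP by (simp add: dist_r')
  have XPXiP: "X * (P * (Xi * P)) = P + R"
  proof -
    have "P * (Xi * P) = (1\<^sub>m m - E) * (Xi * P)" using 1 by simp
    also have "\<dots> = Xi * P - E * (Xi * P)" using ds by (simp add: distm_r')
    finally have "X * (P * (Xi * P)) = X * (Xi * P) - Z" unfolding Z_def using ds by (simp add: distm_l')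
    also have "X * (Xi * P) = P" using XXi ds by (simp add: assoc'[symmetric])
    also have "P - Z = P + R" unfolding Rdef Z_def[symmetric] using dZ dP
      by (intro eq_matI) auto
    finally show ?thesis .
  qed
  have XPXiE: "X * (P * (Xi * E)) = 0\<^sub>m m m"
  proof -
    have "P * (Xi * E) = 0\<^sub>m m m" using PXiE[folded E_def] ds by (simp add: assoc')
    thus ?thesis using ds by simp
  qed
  have XPXi: "X * (P * Xi) = W * P"
  proof -
    have "X * (P * Xi) = X * (P * Xi) * (P + E)" using PplusE ds by simp
    also have "\<dots> = X * (P * (Xi * P)) + X * (P * (Xi * E))" using ds by (simp add: dist_l' assoc')
    also have "\<dots> = P + R" using XPXiP XPXiE ds by simp
    finally show ?thesis using WP by simp
  qed
  have PaWWP: "P * (mat_adjoint W * (W * P)) = T * P"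
  proof -
    have "mat_adjoint W * (W * P) = (1\<^sub>m m + mat_adjoint R) * (P + R)" using aW WP by simp
    also have "\<dots> = P + mat_adjoint R * P + (R + mat_adjoint R * R)" using ds by (simp add: dist_l' dist_r')
    also have "\<dots> = P + R + mat_adjoint R * R" unfolding aRP using ds by (intro eq_matI) (auto simp: ac_simps)
    finally have "P * (mat_adjoint W * (W * P)) = P * (P + R + mat_adjoint R * R)" by simp
    also have "\<dots> = P * P + P * R + P * (mat_adjoint R * R)" using ds by (simp add: dist_l')
    also have "P * (mat_adjoint R * R) = mat_adjoint R * R" using PaR ds by (simp add: assoc'[symmetric])
    also have "P * P + P * R + mat_adjoint R * R = P + mat_adjoint R * R" using PP PR ds by simp
    finally show ?thesis using TP by simp
  qed
  have QWP: "Q * (W * P) = W * P"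
  proof -
    have "Q * (W * P) = W * (S * (P * (mat_adjoint W * (W * P))))" using Q1 ds by (simp add: assoc')
    also have "\<dots> = W * ((S * T) * P)" using PaWWP ds by (simp add: assoc')
    finally show ?thesis using ST ds by simp
  qed
  have XP: "X * P = W * (P * (X * P))"
  proof -
    have "X * P = X * (P * ((Xi * X) * P))" using XiX PP ds by (simp add: assoc'[symmetric])
    also have "\<dots> = (X * (P * Xi)) * (X * P)" using ds by (simp add: assoc')
    also have "\<dots> = W * (P * (X * P))" using XPXi ds by (simp add: assoc')
    finally show ?thesis .
  qed
  show "Q * (X * P) = X * P"
  proof -
    have dQ: "dim_row Q = m" "dim_col Q = m" unfolding Q_def using ds by auto
    have "Q * (X * P) = Q * (W * (P * (X * P)))" by (rule arg_cong[OF XP])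
    also have "\<dots> = (Q * (W * P)) * (X * P)" using ds dQ by (simp add: assoc')
    also have "\<dots> = (W * P) * (X * P)" unfolding QWP ..
    also have "\<dots> = W * (P * (X * P))" using ds by (simp add: assoc')
    finally show ?thesis using XP by simp
  qed
  show "X * P * Xi * Q = Q"
  proof -
    have PWP: "P * (W * P) = P" using WP PP PR ds by (simp add: dist_l')
    have "X * P * Xi * Q = (W * P) * Q" using XPXi ds by (simp add: assoc')
    also have "\<dots> = W * ((P * (W * P)) * (S * mat_adjoint W))" unfolding Q_def using ds by (simp add: assoc')
    also have "\<dots> = Q" unfolding PWP Q_def using ds by (simp add: assoc')
    finally show ?thesis .
  qed
qed

lemma fb_eq_blocks:
  assumes "A \<in> carrier_mat r1 c1" "B \<in> carrier_mat r1 c2" "C \<in> carrier_mat r2 c1" "D \<in> carrier_mat r2 c2"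
    "A' \<in> carrier_mat r1 c1" "B' \<in> carrier_mat r1 c2" "C' \<in> carrier_mat r2 c1" "D' \<in> carrier_mat r2 c2"
    and eq: "four_block_mat A B C D = four_block_mat A' B' C' D'"
  shows "A = A'" "B = B'" "C = C'" "D = D'"
proof -
  note d = carrier_matD[OF assms(1)] carrier_matD[OF assms(2)] carrier_matD[OF assms(3)] carrier_matD[OF assms(4)]
    carrier_matD[OF assms(5)] carrier_matD[OF assms(6)] carrier_matD[OF assms(7)] carrier_matD[OF assms(8)]
  have e: "four_block_mat A B C D $$ (i,j) = four_block_mat A' B' C' D' $$ (i,j)" for i j using eq by simp
  show "A = A'"
  proof (rule eq_matI)
    fix i j assume "i < dim_row A'" "j < dim_col A'"
    thus "A $$ (i,j) = A' $$ (i,j)" using e[of i j] d by simp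
  qed (use d in simp_all)
  show "B = B'"
  proof (rule eq_matI)
    fix i j assume "i < dim_row B'" "j < dim_col B'"
    thus "B $$ (i,j) = B' $$ (i,j)" using e[of i "j + c1"] d by simp
  qed (use d in simp_all)
  show "C = C'"
  proof (rule eq_matI)
    fix i j assume "i < dim_row C'" "j < dim_col C'"
    thus "C $$ (i,j) = C' $$ (i,j)" using e[of "i + r1" j] d by simp
  qed (use d in simp_all)
  show "D = D'"
  proof (rule eq_matI)
    fix i j assume "i < dim_row D'" "j < dim_col D'"
    thus "D $$ (i,j) = D' $$ (i,j)" using e[of "i + r1" "j + c1"] d by simp
  qed (use d in simp_all)
qed

lemma PrYEr:
  fixes Y1 Y2 Y3 Y4 :: "complex mat"
  assumes c: "Y1 \<in> carrier_mat r r" "Y2 \<in> carrier_mat r k" "Y3 \<in> carrier_mat k r" "Y4 \<in> carrier_mat k k"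
  shows "four_block_mat (1\<^sub>m r) (0\<^sub>m r k) (0\<^sub>m k r) (0\<^sub>m k k) * four_block_mat Y1 Y2 Y3 Y4
         * four_block_mat (0\<^sub>m r r) (0\<^sub>m r k) (0\<^sub>m k r) (1\<^sub>m k)
       = four_block_mat (0\<^sub>m r r) Y2 (0\<^sub>m k r) (0\<^sub>m k k)"
proof -
  note d = carrier_matD[OF c(1)] carrier_matD[OF c(2)] carrier_matD[OF c(3)] carrier_matD[OF c(4)]
  have "four_block_mat (1\<^sub>m r) (0\<^sub>m r k) (0\<^sub>m k r) (0\<^sub>m k k) * four_block_mat Y1 Y2 Y3 Y4
      = four_block_mat (1\<^sub>m r * Y1 + 0\<^sub>m r k * Y3) (1\<^sub>m r * Y2 + 0\<^sub>m r k * Y4)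
          (0\<^sub>m k r * Y1 + 0\<^sub>m k k * Y3) (0\<^sub>m k r * Y2 + 0\<^sub>m k k * Y4)"
    by (rule mult_four_block_mat) (use c in auto)
  also have "\<dots> = four_block_mat Y1 Y2 (0\<^sub>m k r) (0\<^sub>m k k)"
    using d by simp
  finally have 1: "four_block_mat (1\<^sub>m r) (0\<^sub>m r k) (0\<^sub>m k r) (0\<^sub>m k k) * four_block_mat Y1 Y2 Y3 Y4
      = four_block_mat Y1 Y2 (0\<^sub>m k r) (0\<^sub>m k k)" .
  have "four_block_mat Y1 Y2 (0\<^sub>m k r) (0\<^sub>m k k) * four_block_mat (0\<^sub>m r r) (0\<^sub>m r k) (0\<^sub>m k r) (1\<^sub>m k)
     = four_block_mat (Y1 * 0\<^sub>m r r + Y2 * 0\<^sub>m k r) (Y1 * 0\<^sub>m r k + Y2 * 1\<^sub>m k)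
          (0\<^sub>m k r * 0\<^sub>m r r + 0\<^sub>m k k * 0\<^sub>m k r) (0\<^sub>m k r * 0\<^sub>m r k + 0\<^sub>m k k * 1\<^sub>m k)"
    by (rule mult_four_block_mat) (use c in auto)
  also have "\<dots> = four_block_mat (0\<^sub>m r r) Y2 (0\<^sub>m k r) (0\<^sub>m k k)"
    using d by simp
  finally show ?thesis unfolding 1 .
qed

lemma unitaryD: assumes "unitary_mat U m"
  shows "U \<in> carrier_mat m m" "U * mat_adjoint U = 1\<^sub>m m" "mat_adjoint U * U = 1\<^sub>m m"
    "dim_row Z = m \<Longrightarrow> mat_adjoint U * (U * Z) = Z" "dim_row Z = m \<Longrightarrow> U * (mat_adjoint U * Z) = Z"
proof -
  show U: "U \<in> carrier_mat m m" "U * mat_adjoint U = 1\<^sub>m m" "mat_adjoint U * U = 1\<^sub>m m"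
    using assms unfolding unitary_mat_def by auto
  have d: "dim_row U = m" "dim_col U = m" using U by auto
  show "dim_row Z = m \<Longrightarrow> mat_adjoint U * (U * Z) = Z"
    using U d by (simp add: assoc'[symmetric])
  show "dim_row Z = m \<Longrightarrow> U * (mat_adjoint U * Z) = Z"
    using U d by (simp add: assoc'[symmetric])
qed

lemma conj_PYE:
  fixes U Y' :: "complex mat"
  assumes U: "unitary_mat U m" and rk: "m = r + k"
  and c: "Y1 \<in> carrier_mat r r" "Y2 \<in> carrier_mat r k" "Y3 \<in> carrier_mat k r" "Y4 \<in> carrier_mat k k"
  and P_def: "P = U * four_block_mat (1\<^sub>m r) (0\<^sub>m r k) (0\<^sub>m k r) (0\<^sub>m k k) * mat_adjoint U"
  shows "P * (U * four_block_mat Y1 Y2 Y3 Y4 * mat_adjoint U) * (1\<^sub>m m - P) = U * four_block_mat (0\<^sub>m r r) Y2 (0\<^sub>m k r) (0\<^sub>m k k) * mat_adjoint U"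
proof -
  note u = unitaryD[OF U]
  have du: "dim_row U = m" "dim_col U = m" using u by auto
  define Pr where "Pr = four_block_mat (1\<^sub>m r) (0\<^sub>m r k) (0\<^sub>m k r) (0\<^sub>m k k :: complex mat)"
  define Er where "Er = four_block_mat (0\<^sub>m r r) (0\<^sub>m r k) (0\<^sub>m k r) (1\<^sub>m k :: complex mat)"
  define Y where "Y = four_block_mat Y1 Y2 Y3 Y4"
  have dPr: "dim_row Pr = m" "dim_col Pr = m" unfolding Pr_def rk by auto
  have dEr: "dim_row Er = m" "dim_col Er = m" unfolding Er_def rk by auto
  have dY: "dim_row Y = m" "dim_col Y = m" unfolding Y_def rk using c by auto
  have 1: "1\<^sub>m m - Pr = Er" unfolding Pr_def Er_def rk by (rule eq_matI) auto
  have IP: "1\<^sub>m m - P = U * Er * mat_adjoint U"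
  proof -
    have "U * Er * mat_adjoint U = U * (1\<^sub>m m - Pr) * mat_adjoint U" unfolding 1 ..
    also have "\<dots> = U * mat_adjoint U - U * Pr * mat_adjoint U" using du dPr
      by (simp add: distm_l' distm_r')
    finally show ?thesis unfolding P_def Pr_def[symmetric] using u by simp
  qed
  have "P * (U * Y * mat_adjoint U) * (1\<^sub>m m - P) = P * (U * Y * mat_adjoint U) * (U * Er * mat_adjoint U)"
    by (simp only: IP)
  also have "\<dots> = U * (Pr * Y * Er) * mat_adjoint U"
    unfolding P_def Pr_def[symmetric] using du dPr dEr dY u(4,5) by (simp add: assoc')
  also have "Pr * Y * Er = four_block_mat (0\<^sub>m r r) Y2 (0\<^sub>m k r) (0\<^sub>m k k)"
    unfolding Pr_def Y_def Er_def by (rule PrYEr[OF c])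
  finally show ?thesis unfolding Y_def .
qed

lemma lower_tri:
  fixes U X X1 X2 X4 P :: "complex mat"
  assumes U: "unitary_mat U m" and rm: "r \<le> m"
  and c: "X1 \<in> carrier_mat r r" "X2 \<in> carrier_mat (m - r) r" "X4 \<in> carrier_mat (m - r) (m - r)"
  and XU: "X = U * four_block_mat X1 (0\<^sub>m r (m - r)) X2 X4 * mat_adjoint U"
  and Xc: "X \<in> carrier_mat m m" and Xinv: "invertible_mat X"
  and P_def: "P = U * four_block_mat (1\<^sub>m r) (0\<^sub>m r (m - r)) (0\<^sub>m (m - r) r) (0\<^sub>m (m - r) (m - r)) * mat_adjoint U"
  shows "P * X * (1\<^sub>m m - P) = 0\<^sub>m m m" "P * minv X * (1\<^sub>m m - P) = 0\<^sub>m m m"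
proof -
  define k where "k = m - r"
  have rk: "m = r + k" unfolding k_def using rm by simp
  note u = unitaryD[OF U]
  have du: "dim_row U = m" "dim_col U = m" using u by auto
  note c' = c[folded k_def]
  have z: "U * four_block_mat (0\<^sub>m r r) (0\<^sub>m r k) (0\<^sub>m k r) (0\<^sub>m k k) * mat_adjoint U = (0\<^sub>m m m :: complex mat)"
    unfolding four_block_zero_mat rk[symmetric] using du by simp
  have "P * X * (1\<^sub>m m - P) = U * four_block_mat (0\<^sub>m r r) (0\<^sub>m r k) (0\<^sub>m k r) (0\<^sub>m k k) * mat_adjoint U"
    unfolding XU k_def[symmetric] by (rule conj_PYE[OF U rk c'(1) zero_carrier_mat c'(2,3) P_def[folded k_def]])
  thus "P * X * (1\<^sub>m m - P) = 0\<^sub>m m m" unfolding z .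
  define Xi where "Xi = minv X"
  have Xi: "Xi \<in> carrier_mat m m" "X * Xi = 1\<^sub>m m" "Xi * X = 1\<^sub>m m" using minv_props[OF Xc Xinv] unfolding Xi_def by auto
  have dXi: "dim_row Xi = m" "dim_col Xi = m" "dim_row X = m" "dim_col X = m" using Xi Xc by auto
  define X' where "X' = four_block_mat X1 (0\<^sub>m r k) X2 X4"
  have dX': "dim_row X' = m" "dim_col X' = m" unfolding X'_def rk using c' by auto
  define Z where "Z = mat_adjoint U * Xi * U"
  have dZ: "dim_row Z = m" "dim_col Z = m" unfolding Z_def using du dXi by auto
  have X'eq: "X' = mat_adjoint U * X * U" unfolding XU X'_def[symmetric] k_def[symmetric] using du dX' u(3,4,5)
    by (simp add: assoc')
  have X'Z: "X' * Z = 1\<^sub>m m"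
  proof -
    have "X' * Z = mat_adjoint U * ((X * Xi) * U)" unfolding X'eq Z_def using du dXi u(4,5) by (simp add: assoc')
    also have "\<dots> = 1\<^sub>m m" using Xi(2) u(3) du by simp
    finally show ?thesis .
  qed
  have XiZ: "Xi = U * Z * mat_adjoint U" unfolding Z_def using du dXi u(2) by (simp add: assoc' u(5))
  obtain Z1 Z2 Z3 Z4 where sb: "split_block Z r r = (Z1, Z2, Z3, Z4)" by (cases "split_block Z r r") auto
  have dZ': "dim_row Z = r + k" "dim_col Z = r + k" using dZ rk by auto
  note zb = split_block[OF sb dZ']
  have "four_block_mat (X1 * Z1 + 0\<^sub>m r k * Z3) (X1 * Z2 + 0\<^sub>m r k * Z4) (X2 * Z1 + X4 * Z3) (X2 * Z2 + X4 * Z4)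
      = X' * Z" unfolding X'_def zb(5)
    by (rule mult_four_block_mat[symmetric]) (use c' zb in auto)
  also have "\<dots> = four_block_mat (1\<^sub>m r) (0\<^sub>m r k) (0\<^sub>m k r) (1\<^sub>m k)" unfolding X'Z rk by simp
  finally have fbe: "four_block_mat (X1 * Z1 + 0\<^sub>m r k * Z3) (X1 * Z2 + 0\<^sub>m r k * Z4) (X2 * Z1 + X4 * Z3) (X2 * Z2 + X4 * Z4)
      = four_block_mat (1\<^sub>m r) (0\<^sub>m r k) (0\<^sub>m k r) (1\<^sub>m k)" .
  have cc: "X1 * Z1 + 0\<^sub>m r k * Z3 \<in> carrier_mat r r" "X1 * Z2 + 0\<^sub>m r k * Z4 \<in> carrier_mat r k"
    "X2 * Z1 + X4 * Z3 \<in> carrier_mat k r" "X2 * Z2 + X4 * Z4 \<in> carrier_mat k k"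
    using c' zb unfolding carrier_mat_def by auto
  note fe = fb_eq_blocks[OF cc one_carrier_mat zero_carrier_mat zero_carrier_mat one_carrier_mat fbe]
  have dd: "dim_row Z1 = r" "dim_col Z1 = r" "dim_row Z2 = r" "dim_col Z2 = k" "dim_row Z3 = k" "dim_col Z3 = r"
    "dim_row Z4 = k" "dim_col Z4 = k" "dim_row X1 = r" "dim_col X1 = r" using zb c' by auto
  have XZ1: "X1 * Z1 = 1\<^sub>m r" using fe(1) dd by simp
  have XZ2: "X1 * Z2 = 0\<^sub>m r k" using fe(2) dd by simp
  have ZX1: "Z1 * X1 = 1\<^sub>m r" using mat_mult_left_right_inverse[OF c'(1) zb(1) XZ1] .
  have Z2: "Z2 = 0\<^sub>m r k"
  proof -
    have "Z2 = (Z1 * X1) * Z2" using ZX1 dd by simp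
    also have "\<dots> = Z1 * (X1 * Z2)" using dd by (simp add: assoc')
    finally show ?thesis using XZ2 dd by simp
  qed
  have "P * minv X * (1\<^sub>m m - P) = U * four_block_mat (0\<^sub>m r r) (0\<^sub>m r k) (0\<^sub>m k r) (0\<^sub>m k k) * mat_adjoint U"
    unfolding Xi_def[symmetric] XiZ zb(5) Z2
    by (rule conj_PYE[OF U rk zb(1) zero_carrier_mat zb(3,4) P_def[folded k_def]])
  thus "P * minv X * (1\<^sub>m m - P) = 0\<^sub>m m m" unfolding z .
qed

lemma adj_U_conj: assumes "dim_row U = m" "dim_col U = m" "dim_row A = m" "dim_col A = m" "mat_adjoint A = A"
  shows "mat_adjoint (U * A * mat_adjoint U) = U * A * mat_adjoint (U :: complex mat)"
  using assms by (simp add: adj_mult' assoc')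

lemma svd_mp:
  fixes U V S Si N :: "complex mat"
  assumes U: "unitary_mat U m" and V: "unitary_mat V n" and rm: "r \<le> m" and rn: "r \<le> n"
  and S: "S \<in> carrier_mat r r" and Si: "Si \<in> carrier_mat r r" and SSi: "S * Si = 1\<^sub>m r" and SiS: "Si * S = 1\<^sub>m r"
  and svd: "N = U * four_block_mat S (0\<^sub>m r (n - r)) (0\<^sub>m (m - r) r) (0\<^sub>m (m - r) (n - r)) * mat_adjoint V"
  shows "mp_inv N = V * four_block_mat Si (0\<^sub>m r (m - r)) (0\<^sub>m (n - r) r) (0\<^sub>m (n - r) (m - r)) * mat_adjoint U"
    "N * mp_inv N = U * four_block_mat (1\<^sub>m r) (0\<^sub>m r (m - r)) (0\<^sub>m (m - r) r) (0\<^sub>m (m - r) (m - r)) * mat_adjoint U"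
    "mp_inv N * N = V * four_block_mat (1\<^sub>m r) (0\<^sub>m r (n - r)) (0\<^sub>m (n - r) r) (0\<^sub>m (n - r) (n - r)) * mat_adjoint V"
    "mp_inv N \<in> carrier_mat n m" "N * mp_inv N * N = N" "mp_inv N * N * mp_inv N = mp_inv N"
    "mat_adjoint (N * mp_inv N) = N * mp_inv N" "mat_adjoint (mp_inv N * N) = mp_inv N * N"
proof -
  define k where "k = m - r"
  define l where "l = n - r"
  have rk: "m = r + k" unfolding k_def using rm by simp
  have rl: "n = r + l" unfolding l_def using rn by simp
  note u = unitaryD[OF U] and v = unitaryD[OF V]
  have du: "dim_row U = m" "dim_col U = m" "dim_row V = n" "dim_col V = n" using u v by auto
  define D where "D = four_block_mat S (0\<^sub>m r l) (0\<^sub>m k r) (0\<^sub>m k l)"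
  define Di where "Di = four_block_mat Si (0\<^sub>m r k) (0\<^sub>m l r) (0\<^sub>m l k)"
  define Pr where "Pr = four_block_mat (1\<^sub>m r) (0\<^sub>m r k) (0\<^sub>m k r) (0\<^sub>m k k :: complex mat)"
  define Qr where "Qr = four_block_mat (1\<^sub>m r) (0\<^sub>m r l) (0\<^sub>m l r) (0\<^sub>m l l :: complex mat)"
  have dS: "dim_row S = r" "dim_col S = r" "dim_row Si = r" "dim_col Si = r" using S Si by auto
  have dD: "dim_row D = m" "dim_col D = n" "dim_row Di = n" "dim_col Di = m"
    "dim_row Pr = m" "dim_col Pr = m" "dim_row Qr = n" "dim_col Qr = n"
    unfolding D_def Di_def Pr_def Qr_def rk rl using dS by auto
  have DDi: "D * Di = Pr"
  proof -
    have "D * Di = four_block_mat (S * Si + 0\<^sub>m r l * 0\<^sub>m l r) (S * 0\<^sub>m r k + 0\<^sub>m r l * 0\<^sub>m l k)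
       (0\<^sub>m k r * Si + 0\<^sub>m k l * 0\<^sub>m l r) (0\<^sub>m k r * 0\<^sub>m r k + 0\<^sub>m k l * 0\<^sub>m l k)"
      unfolding D_def Di_def by (rule mult_four_block_mat) (use S Si in auto)
    thus ?thesis unfolding Pr_def using SSi dS by simp
  qed
  have DiD: "Di * D = Qr"
  proof -
    have "Di * D = four_block_mat (Si * S + 0\<^sub>m r k * 0\<^sub>m k r) (Si * 0\<^sub>m r l + 0\<^sub>m r k * 0\<^sub>m k l)
       (0\<^sub>m l r * S + 0\<^sub>m l k * 0\<^sub>m k r) (0\<^sub>m l r * 0\<^sub>m r l + 0\<^sub>m l k * 0\<^sub>m k l)"
      unfolding D_def Di_def by (rule mult_four_block_mat) (use S Si in auto)
    thus ?thesis unfolding Qr_def using SiS dS by simp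
  qed
  have PrD: "Pr * D = D"
  proof -
    have "Pr * D = four_block_mat (1\<^sub>m r * S + 0\<^sub>m r k * 0\<^sub>m k r) (1\<^sub>m r * 0\<^sub>m r l + 0\<^sub>m r k * 0\<^sub>m k l)
       (0\<^sub>m k r * S + 0\<^sub>m k k * 0\<^sub>m k r) (0\<^sub>m k r * 0\<^sub>m r l + 0\<^sub>m k k * 0\<^sub>m k l)"
      unfolding D_def Pr_def by (rule mult_four_block_mat) (use S in auto)
    thus ?thesis unfolding D_def using dS by simp
  qed
  have QrDi: "Qr * Di = Di"
  proof -
    have "Qr * Di = four_block_mat (1\<^sub>m r * Si + 0\<^sub>m r l * 0\<^sub>m l r) (1\<^sub>m r * 0\<^sub>m r k + 0\<^sub>m r l * 0\<^sub>m l k)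
       (0\<^sub>m l r * Si + 0\<^sub>m l l * 0\<^sub>m l r) (0\<^sub>m l r * 0\<^sub>m r k + 0\<^sub>m l l * 0\<^sub>m l k)"
      unfolding Di_def Qr_def by (rule mult_four_block_mat) (use Si in auto)
    thus ?thesis unfolding Di_def using dS by simp
  qed
  have aPr: "mat_adjoint Pr = Pr" unfolding Pr_def by (subst adj_four_block) auto
  have aQr: "mat_adjoint Qr = Qr" unfolding Qr_def by (subst adj_four_block) auto
  define G where "G = V * Di * mat_adjoint U"
  have N': "N = U * D * mat_adjoint V" unfolding svd D_def k_def l_def ..
  have NG: "N * G = U * Pr * mat_adjoint U"
    unfolding N' G_def using du dD v(4) by (simp add: assoc' DDi[symmetric])
  have GN: "G * N = V * Qr * mat_adjoint V"
    unfolding N' G_def using du dD u(4) by (simp add: assoc' DiD[symmetric])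
  have Nc: "N \<in> carrier_mat m n" unfolding N' carrier_mat_def using du dD by simp
  have Gc: "G \<in> carrier_mat n m" unfolding G_def carrier_mat_def using du dD by simp
  have e1: "N * G * N = N"
  proof -
    have "N * G * N = U * ((Pr * D) * mat_adjoint V)" unfolding NG unfolding N' using du dD u(4) by (simp add: assoc')
    thus ?thesis unfolding PrD N' using du dD by (simp add: assoc')
  qed
  have e2: "G * N * G = G"
  proof -
    have "G * N * G = V * ((Qr * Di) * mat_adjoint U)" unfolding GN unfolding G_def using du dD v(4) by (simp add: assoc')
    thus ?thesis unfolding QrDi G_def using du dD by (simp add: assoc')
  qed
  have e3: "mat_adjoint (N * G) = N * G" unfolding NG by (rule adj_U_conj) (use du dD aPr in auto)
  have e4: "mat_adjoint (G * N) = G * N" unfolding GN by (rule adj_U_conj) (use du dD aQr in auto)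
  have mp: "mp_inv N = G" by (rule mp_inv_eq[OF Nc Gc e1 e2 e3 e4])
  show "mp_inv N = V * four_block_mat Si (0\<^sub>m r (m - r)) (0\<^sub>m (n - r) r) (0\<^sub>m (n - r) (m - r)) * mat_adjoint U"
    unfolding mp G_def Di_def k_def l_def ..
  show "N * mp_inv N = U * four_block_mat (1\<^sub>m r) (0\<^sub>m r (m - r)) (0\<^sub>m (m - r) r) (0\<^sub>m (m - r) (m - r)) * mat_adjoint U"
    unfolding mp NG Pr_def k_def ..
  show "mp_inv N * N = V * four_block_mat (1\<^sub>m r) (0\<^sub>m r (n - r)) (0\<^sub>m (n - r) r) (0\<^sub>m (n - r) (n - r)) * mat_adjoint V"
    unfolding mp GN Qr_def l_def ..
  show "mp_inv N \<in> carrier_mat n m" "N * mp_inv N * N = N" "mp_inv N * N * mp_inv N = mp_inv N"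
    "mat_adjoint (N * mp_inv N) = N * mp_inv N" "mat_adjoint (mp_inv N * N) = mp_inv N * N"
    unfolding mp using Gc e1 e2 e3 e4 by auto
qed

lemma (in vec_space) rank_le_nr: assumes A: "A \<in> carrier_mat n nc" shows "rank A \<le> n"
proof -
  obtain S where max: "maximal S (\<lambda>T. T \<subseteq> set (cols A) \<and> lin_indpt T)"
    using maximal_exists[of "(\<lambda>T. T \<subseteq> set (cols A) \<and> lin_indpt T)" "card (set (cols A))" "{}"]
    by (meson List.finite_set card_mono empty_iff empty_subsetI finite_lin_indpt2 rev_finite_subset)
  have "S \<subseteq> set (cols A)" "lin_indpt S" using max unfolding maximal_def by auto
  moreover have "set (cols A) \<subseteq> carrier_vec n" using A cols_dim by blast
  ultimately have "card S \<le> dim" using li_le_dim(2)[OF fin_dim] by auto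
  thus ?thesis using rank_card_indpt[OF A max] dim_is_n by simp
qed

theorem corollary3p2:
  fixes m n r :: nat and N U V \<Sigma> X Y :: "complex mat"
  assumes N: "N \<in> carrier_mat m n"
    and rk: "vec_space.rank m N = r"
    and \<Sigma>: "\<Sigma> \<in> carrier_mat r r" "diagonal_mat \<Sigma>"
    and \<Sigma>pos: "\<forall>i<r. Im (\<Sigma> $$ (i,i)) = 0 \<and> Re (\<Sigma> $$ (i,i)) > 0"
    and U: "unitary_mat U m" and V: "unitary_mat V n"
    and svd: "N = U * four_block_mat \<Sigma> (0\<^sub>m r (n - r)) (0\<^sub>m (m - r) r) (0\<^sub>m (m - r) (n - r))
                  * mat_adjoint V"
    and X: "X \<in> carrier_mat m m" "invertible_mat X"
    and Y: "Y \<in> carrier_mat n n" "invertible_mat Y"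
  shows
   "((\<exists>X1 X2 X4. X1 \<in> carrier_mat r r \<and> X2 \<in> carrier_mat (m - r) r \<and>
        X4 \<in> carrier_mat (m - r) (m - r) \<and>
        X = U * four_block_mat X1 (0\<^sub>m r (m - r)) X2 X4 * mat_adjoint U) \<longrightarrow>
     (let M1 = X * N; E = 1\<^sub>m m - N * mp_inv N; R = X * E * minv X * (E - 1\<^sub>m m) in
        M1 * mp_inv M1 =
          (1\<^sub>m m + R) * (N * mp_inv N) * minv (1\<^sub>m m + mat_adjoint R * R) * (1\<^sub>m m + mat_adjoint R)))
    \<and>
    ((\<exists>Y1 Y3 Y4. Y1 \<in> carrier_mat r r \<and> Y3 \<in> carrier_mat r (n - r) \<and>
        Y4 \<in> carrier_mat (n - r) (n - r) \<and>
        Y = V * four_block_mat Y1 Y3 (0\<^sub>m (n - r) r) Y4 * mat_adjoint V) \<longrightarrow>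
     (let M2 = N * Y; F = 1\<^sub>m n - mp_inv N * N; L = (F - 1\<^sub>m n) * minv Y * F * Y in
        mp_inv M2 * M2 =
          (1\<^sub>m n + mat_adjoint L) * minv (1\<^sub>m n + L * mat_adjoint L) * (mp_inv N * N) * (1\<^sub>m n + L)))"
proof -
  have rn: "r \<le> n" using vec_space.rank_le_nc[OF N] rk by simp
  have rm: "r \<le> m" using vec_space.rank_le_nr[OF N] rk by simp
  have detS: "det \<Sigma> \<noteq> 0"
  proof -
    have ut: "upper_triangular \<Sigma>" using \<Sigma>(2) carrier_matD[OF \<Sigma>(1)] unfolding diagonal_mat_def upper_triangular_def
      by (metis less_trans nat_neq_iff)
    have "0 \<notin> set (diag_mat \<Sigma>)"
    proof
      assume "0 \<in> set (diag_mat \<Sigma>)"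
      then obtain i where i: "i < r" "\<Sigma> $$ (i,i) = 0" using \<Sigma>(1) unfolding diag_mat_def by auto
      thus False using \<Sigma>pos by force
    qed
    thus ?thesis unfolding det_upper_triangular[OF ut \<Sigma>(1)] by (simp add: prod_list_zero_iff)
  qed
  obtain \<Sigma>i where \<Sigma>i: "\<Sigma>i \<in> carrier_mat r r" "\<Sigma> * \<Sigma>i = 1\<^sub>m r" "\<Sigma>i * \<Sigma> = 1\<^sub>m r"
    using invertible_carrier[OF \<Sigma>(1) det_ne0_invertible[OF \<Sigma>(1) detS]] by auto
  note mpN = svd_mp[OF U V rm rn \<Sigma>(1) \<Sigma>i svd]
  define GN where "GN = mp_inv N"
  define P where "P = N * GN"
  define P' where "P' = GN * N"
  have dN: "dim_row N = m" "dim_col N = n" "dim_row GN = n" "dim_col GN = m" using N mpN(4) unfolding GN_def by auto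
  have dP: "dim_row P = m" "dim_col P = m" "dim_row P' = n" "dim_col P' = n" unfolding P_def P'_def using dN by auto
  have Pc: "P \<in> carrier_mat m m" "P' \<in> carrier_mat n n" unfolding carrier_mat_def using dP by auto
  have NGN: "N * (GN * N) = N" using mpN(5) dN unfolding GN_def by (simp add: assoc')
  have GNG: "GN * (N * GN) = GN" using mpN(6) dN unfolding GN_def by (simp add: assoc')
  have PP: "P * P = P" unfolding P_def using GNG dN by (simp add: assoc')
  have PP': "P' * P' = P'" unfolding P'_def using NGN dN by (simp add: assoc')
  have aP: "mat_adjoint P = P" "mat_adjoint P' = P'" unfolding P_def P'_def GN_def using mpN(7,8) by auto
  have Pform: "P = U * four_block_mat (1\<^sub>m r) (0\<^sub>m r (m - r)) (0\<^sub>m (m - r) r) (0\<^sub>m (m - r) (m - r)) * mat_adjoint U"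
    unfolding P_def GN_def by (rule mpN(2))
  have P'form: "P' = V * four_block_mat (1\<^sub>m r) (0\<^sub>m r (n - r)) (0\<^sub>m (n - r) r) (0\<^sub>m (n - r) (n - r)) * mat_adjoint V"
    unfolding P'_def GN_def by (rule mpN(3))
  show ?thesis
  proof (intro conjI impI)
    assume "\<exists>X1 X2 X4. X1 \<in> carrier_mat r r \<and> X2 \<in> carrier_mat (m - r) r \<and>
        X4 \<in> carrier_mat (m - r) (m - r) \<and>
        X = U * four_block_mat X1 (0\<^sub>m r (m - r)) X2 X4 * mat_adjoint U"
    then obtain X1 X2 X4 where c: "X1 \<in> carrier_mat r r" "X2 \<in> carrier_mat (m - r) r"
        "X4 \<in> carrier_mat (m - r) (m - r)" and XU: "X = U * four_block_mat X1 (0\<^sub>m r (m - r)) X2 X4 * mat_adjoint U"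
      by blast
    note lt = lower_tri[OF U rm c XU X Pform]
    define Xi where "Xi = minv X"
    have Xi: "Xi \<in> carrier_mat m m" "X * Xi = 1\<^sub>m m" "Xi * X = 1\<^sub>m m" using minv_props[OF X] unfolding Xi_def by auto
    define R where "R = X * (1\<^sub>m m - P) * Xi * ((1\<^sub>m m - P) - 1\<^sub>m m)"
    define S where "S = minv (1\<^sub>m m + mat_adjoint R * R)"
    define W where "W = 1\<^sub>m m + R"
    define Q where "Q = W * P * S * mat_adjoint W"
    note co = core[OF Pc(1) PP aP(1) X(1) Xi lt(1) lt(2)[folded Xi_def] R_def S_def W_def Q_def]
    have dX: "dim_row X = m" "dim_col X = m" "dim_row Xi = m" "dim_col Xi = m" using X Xi by auto
    have dR: "dim_row R = m" "dim_col R = m" unfolding R_def using dX dP by auto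
    have dQ: "dim_row Q = m" "dim_col Q = m" unfolding Q_def S_def W_def using dX dP dR by auto
    define G where "G = GN * Xi * Q"
    define M1 where "M1 = X * N"
    have PN: "P * N = N" unfolding P_def using NGN dN by (simp add: assoc')
    have QXN: "Q * (X * N) = X * N"
    proof -
      have "Q * (X * N) = Q * (X * (P * N))" by (simp only: PN)
      also have "\<dots> = Q * (X * P) * N" using dQ dX dP dN by (simp add: assoc')
      also have "\<dots> = X * (P * N)" unfolding co(3) using dX dP dN by (simp add: assoc')
      finally show ?thesis by (simp only: PN)
    qed
    have e3: "M1 * G = Q"
    proof -
      have "M1 * G = X * P * Xi * Q" unfolding M1_def G_def P_def using dX dN dQ by (simp add: assoc')
      thus ?thesis using co(4) by simp
    qed
    have e4: "G * M1 = GN * N"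
    proof -
      have "G * M1 = GN * (Xi * (Q * (X * N)))" unfolding M1_def G_def using dX dN dQ by (simp add: assoc')
      also have "\<dots> = GN * ((Xi * X) * N)" unfolding QXN using dX dN by (simp add: assoc')
      finally show ?thesis using Xi dN by simp
    qed
    have mp1: "mp_inv M1 = G"
    proof (rule mp_inv_eq)
      show "M1 \<in> carrier_mat m n" unfolding M1_def carrier_mat_def using dX dN by simp
      show "G \<in> carrier_mat n m" unfolding G_def carrier_mat_def using dX dN dQ by simp
      show "M1 * G * M1 = M1"
      proof -
        have "M1 * G * M1 = Q * M1" by (simp only: e3)
        thus ?thesis unfolding M1_def using QXN by simp
      qed
      show "G * M1 * G = G"
      proof -
        have "G * M1 * G = GN * N * G" by (simp only: e4)
        also have "\<dots> = GN * (N * GN) * Xi * Q" unfolding G_def using dN dX dQ by (simp add: assoc')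
        finally show ?thesis unfolding GNG G_def .
      qed
      show "mat_adjoint (M1 * G) = M1 * G" unfolding e3 by (rule co(2))
      show "mat_adjoint (G * M1) = G * M1" unfolding e4 GN_def by (rule mpN(8))
    qed
    have aW: "mat_adjoint W = 1\<^sub>m m + mat_adjoint R" unfolding W_def using dR by (simp add: adj_add')
    show "let M1 = X * N; E = 1\<^sub>m m - N * mp_inv N; R = X * E * minv X * (E - 1\<^sub>m m)
     in M1 * mp_inv M1 =
        (1\<^sub>m m + R) * (N * mp_inv N) * minv (1\<^sub>m m + mat_adjoint R * R) * (1\<^sub>m m + mat_adjoint R)"
      unfolding Let_def GN_def[symmetric] P_def[symmetric] Xi_def[symmetric] R_def[symmetric]
        M1_def[symmetric] mp1 e3 S_def[symmetric] W_def[symmetric] aW[symmetric] Q_def[symmetric] ..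
  next
    assume "\<exists>Y1 Y3 Y4. Y1 \<in> carrier_mat r r \<and> Y3 \<in> carrier_mat r (n - r) \<and>
        Y4 \<in> carrier_mat (n - r) (n - r) \<and>
        Y = V * four_block_mat Y1 Y3 (0\<^sub>m (n - r) r) Y4 * mat_adjoint V"
    then obtain Y1 Y3 Y4 where c: "Y1 \<in> carrier_mat r r" "Y3 \<in> carrier_mat r (n - r)"
        "Y4 \<in> carrier_mat (n - r) (n - r)" and YV: "Y = V * four_block_mat Y1 Y3 (0\<^sub>m (n - r) r) Y4 * mat_adjoint V"
      by blast
    note v = unitaryD[OF V]
    have dV: "dim_row V = n" "dim_col V = n" using v by auto
    define Yi where "Yi = minv Y"
    have Yi: "Yi \<in> carrier_mat n n" "Y * Yi = 1\<^sub>m n" "Yi * Y = 1\<^sub>m n" using minv_props[OF Y] unfolding Yi_def by auto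
    have dY: "dim_row Y = n" "dim_col Y = n" "dim_row Yi = n" "dim_col Yi = n" using Y Yi by auto
    have c': "mat_adjoint Y1 \<in> carrier_mat r r" "mat_adjoint Y3 \<in> carrier_mat (n - r) r"
        "mat_adjoint Y4 \<in> carrier_mat (n - r) (n - r)" using c by auto
    have aYV: "mat_adjoint Y = V * four_block_mat (mat_adjoint Y1) (0\<^sub>m r (n - r)) (mat_adjoint Y3) (mat_adjoint Y4) * mat_adjoint V"
    proof -
      have "mat_adjoint (four_block_mat Y1 Y3 (0\<^sub>m (n - r) r) Y4) = four_block_mat (mat_adjoint Y1) (0\<^sub>m r (n - r)) (mat_adjoint Y3) (mat_adjoint Y4)"
        using c by (subst adj_four_block) auto
      moreover have "dim_row (four_block_mat Y1 Y3 (0\<^sub>m (n - r) r) Y4) = n" "dim_col (four_block_mat Y1 Y3 (0\<^sub>m (n - r) r) Y4) = n"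
        using c rn by auto
      ultimately show ?thesis unfolding YV using dV by (simp add: adj_mult' assoc')
    qed
    have aYc: "mat_adjoint Y \<in> carrier_mat n n" using Y by simp
    have aYaYi: "mat_adjoint Y * mat_adjoint Yi = 1\<^sub>m n"
    proof -
      have "mat_adjoint Y * mat_adjoint Yi = mat_adjoint (Yi * Y)" using dY by (simp add: adj_mult')
      thus ?thesis using Yi by simp
    qed
    have aYi: "mat_adjoint Yi \<in> carrier_mat n n" using Yi by simp
    have aYinv: "invertible_mat (mat_adjoint Y)" by (rule invertibleI[OF aYc aYi aYaYi])
    have minvaY: "minv (mat_adjoint Y) = mat_adjoint Yi" by (rule minv_unique[OF aYc aYi aYaYi])
    have aYiaY: "mat_adjoint Yi * mat_adjoint Y = 1\<^sub>m n" using mat_mult_left_right_inverse[OF aYc aYi aYaYi] .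
    note lt = lower_tri[OF V rn c' aYV aYc aYinv P'form]
    define F where "F = 1\<^sub>m n - P'"
    define L where "L = (F - 1\<^sub>m n) * Yi * F * Y"
    define R where "R = mat_adjoint Y * (1\<^sub>m n - P') * mat_adjoint Yi * ((1\<^sub>m n - P') - 1\<^sub>m n)"
    define S where "S = minv (1\<^sub>m n + mat_adjoint R * R)"
    define W where "W = 1\<^sub>m n + R"
    define Q where "Q = W * P' * S * mat_adjoint W"
    note co = core[OF Pc(2) PP' aP(2) aYc aYi aYaYi aYiaY lt(1) lt(2)[unfolded minvaY] R_def S_def W_def Q_def]
    have dF: "dim_row F = n" "dim_col F = n" unfolding F_def using dP by auto
    have aF: "mat_adjoint F = F" unfolding F_def using dP aP by (simp add: adj_minus')
    have aF1: "mat_adjoint (F - 1\<^sub>m n) = F - 1\<^sub>m n" using dF aF by (simp add: adj_minus')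
    have RL: "R = mat_adjoint L"
      unfolding R_def L_def F_def[symmetric] using dF dY aF aF1 by (simp add: adj_mult' assoc')
    have dL: "dim_row L = n" "dim_col L = n" unfolding L_def using dF dY by auto
    have aW: "mat_adjoint W = 1\<^sub>m n + L" unfolding W_def RL using dL by (simp add: adj_add')
    have Sd: "S = minv (1\<^sub>m n + L * mat_adjoint L)" unfolding S_def RL by simp
    have dQ: "dim_row Q = n" "dim_col Q = n" unfolding Q_def S_def W_def RL using dL dP by auto
    have QYi: "Q * (Yi * (P' * Y)) = Q"
    proof -
      have "mat_adjoint (mat_adjoint Y * P' * mat_adjoint Yi * Q) = Q * (Yi * (P' * Y))"
        using dY dP dQ co(2) aP(2) by (simp add: adj_mult' assoc')
      thus ?thesis using co(4) co(2) by simp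
    qed
    have PYQ: "P' * (Y * Q) = P' * Y"
    proof -
      have "mat_adjoint (Q * (mat_adjoint Y * P')) = P' * (Y * Q)"
        using dY dP dQ co(2) aP(2) by (simp add: adj_mult' assoc')
      moreover have "mat_adjoint (mat_adjoint Y * P') = P' * Y" using dY dP aP(2) by (simp add: adj_mult')
      ultimately show ?thesis using co(3) co(2) by simp
    qed
    define G where "G = Q * Yi * GN"
    define M2 where "M2 = N * Y"
    have NP: "N * P' = N" unfolding P'_def using NGN dN by (simp add: assoc')
    have e4: "G * M2 = Q"
    proof -
      have "G * M2 = Q * (Yi * (P' * Y))" unfolding G_def M2_def P'_def using dQ dY dN by (simp add: assoc')
      thus ?thesis using QYi by simp
    qed
    have e3: "M2 * G = N * GN"
    proof -
      have "M2 * G = (N * P') * (Y * (Q * (Yi * GN)))" unfolding G_def M2_def NP using dQ dY dN by (simp add: assoc')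
      also have "\<dots> = N * ((P' * (Y * Q)) * (Yi * GN))" using dQ dY dN dP by (simp add: assoc')
      also have "\<dots> = N * (P' * ((Y * Yi) * GN))" unfolding PYQ using dY dN dP by (simp add: assoc')
      also have "\<dots> = N * GN" using Yi(2) dN NP unfolding P'_def using GNG by (simp add: assoc')
      finally show ?thesis .
    qed
    have QQ: "Q * Q = Q"
    proof -
      have "Q * (Yi * (P' * (Y * Q))) = (Q * (Yi * (P' * Y))) * Q" using dQ dY dP by (simp add: assoc')
      hence 1: "Q * (Yi * (P' * (Y * Q))) = Q * Q" by (simp only: QYi)
      have "Q * (Yi * (P' * (Y * Q))) = Q" unfolding PYQ using QYi .
      thus ?thesis using 1 by simp
    qed
    have mp2: "mp_inv M2 = G"
    proof (rule mp_inv_eq)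
      show "M2 \<in> carrier_mat m n" unfolding M2_def carrier_mat_def using dY dN by simp
      show "G \<in> carrier_mat n m" unfolding G_def carrier_mat_def using dY dN dQ by simp
      show "M2 * G * M2 = M2"
      proof -
        have "M2 * G * M2 = N * GN * M2" by (simp only: e3)
        also have "\<dots> = (N * (GN * N)) * Y" unfolding M2_def using dN dY by (simp add: assoc')
        finally show ?thesis unfolding NGN M2_def .
      qed
      show "G * M2 * G = G"
      proof -
        have "G * M2 * G = Q * G" by (simp only: e4)
        also have "\<dots> = (Q * Q) * Yi * GN" unfolding G_def using dQ dY dN by (simp add: assoc')
        finally show ?thesis unfolding QQ G_def .
      qed
      show "mat_adjoint (M2 * G) = M2 * G" unfolding e3 GN_def by (rule mpN(7))
      show "mat_adjoint (G * M2) = G * M2" unfolding e4 by (rule co(2))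
    qed
    show "let M2 = N * Y; F = 1\<^sub>m n - mp_inv N * N; L = (F - 1\<^sub>m n) * minv Y * F * Y in
        mp_inv M2 * M2 =
          (1\<^sub>m n + mat_adjoint L) * minv (1\<^sub>m n + L * mat_adjoint L) * (mp_inv N * N) * (1\<^sub>m n + L)"
    proof -
      have "Q = W * S * P' * mat_adjoint W" by (rule co(1))
      also have "\<dots> = W * S * P' * (1\<^sub>m n + L)" unfolding aW ..
      also have "\<dots> = (1\<^sub>m n + mat_adjoint L) * S * P' * (1\<^sub>m n + L)" unfolding W_def RL ..
      also have "\<dots> = (1\<^sub>m n + mat_adjoint L) * minv (1\<^sub>m n + L * mat_adjoint L) * P' * (1\<^sub>m n + L)" unfolding Sd ..
      finally have fin: "Q = (1\<^sub>m n + mat_adjoint L) * minv (1\<^sub>m n + L * mat_adjoint L) * P' * (1\<^sub>m n + L)" .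
      show ?thesis
        unfolding Let_def GN_def[symmetric] P'_def[symmetric] Yi_def[symmetric] F_def[symmetric]
          L_def[symmetric] M2_def[symmetric] mp2 e4 fin ..
    qed
  qed
qed

end
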